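(* Let $S_1=(x_1,y_1),S_2=(x_2,y_2),S_3=(x_3,y_3),S_4=(x_4,y_4)$ be four points in the plane with $x_1\le x_2\le x_3\le x_4$, and let $\delta_1,\ldots,\delta_4$ be positive integers. For $i\in\{1,\dots,4\}$ define the pivot point $P_i=(\tilde x_i,\tilde y_i)$ by $$\tilde x_i=x_i+\frac{\sum_{j=1}^4\delta_j(x_j-x_i)^2}{\sum_{j=1}^4\delta_j(x_j-x_i)},\qquad \tilde y_i=y_i+\frac{\sum_{j=1}^4\delta_j(x_j-x_i)(y_j-y_i)}{\sum_{j=1}^4\delta_j(x_j-x_i)},$$ whenever the denominator is nonzero. Then: (a) whenever $P_2$ is defined, there are real numbers $\lambda_1,\lambda_3,\lambda_4$ with $\lambda_1+\lambda_3+\lambda_4=1$ and $P_2=\lambda_1S_1+\lambda_3S_3+\lambda_4S_4$ such that either ($\lambda_1\ge 0$, $\lambda_3\le 0$, $\lambda_4\le 0$) or ($\lambda_1\le 0$, $\lambda_3\ge 0$, $\lambda_4\ge 0$); i.e. $P_2$ lies in the regions of sign pattern $+--$ or $-++$ with respect to the triangle $S_1S_3S_4$; (b) whenever $P_3$ is defined, there are real numbers $\mu_1,\mu_2,\mu_4$ with $\mu_1+\mu_2+\mu_4=1$ and $P_3=\mu_1S_1+\mu_2S_2+\mu_4S_4$ such that either ($\mu_1\ge0$, $\mu_2\ge 0$, $\mu_4\le 0$) or ($\mu_1\le 0$, $\mu_2\le 0$, $\mu_4\ge 0$); i.e. $P_3$ lies in the regions of sign pattern $++-$ or $--+$ with respect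 to the triangle $S_1S_2S_4$.
   Context: The pivot point $P_i$ is the point through which the least-squares regression line of the data, in which each $S_j$ appears $\delta_j$ times, always passes regardless of how many additional copies of $S_i$ are added; it is undefined when $\sum_j\delta_j(x_j-x_i)=0$. For a triangle $ABC$, the barycentric coordinates of a point $Q$ are the reals $(\lambda_A,\lambda_B,\lambda_C)$ with sum $1$ and $Q=\lambda_AA+\lambda_BB+\lambda_CC$ (unique when $A,B,C$ are not collinear); the sign pattern of $(\lambda_A,\lambda_B,\lambda_C)$ (e.g. $+--$) determines which of the seven regions cut out by the three edge-lines contains $Q$. *)

theory Defs
  imports Complex_Main
begin

text \<open>Data points S_j = (x j, y j), j = 1..4, with multiplicities d j.
  Pivot point P_i = (pivot_x x d i, pivot_y x y d i), defined iff pivot_den x d i \<noteq> 0.\<close>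

definition pivot_den :: "(nat \<Rightarrow> real) \<Rightarrow> (nat \<Rightarrow> nat) \<Rightarrow> nat \<Rightarrow> real" where
  "pivot_den x d i = (\<Sum>j\<in>{1..4}. real (d j) * (x j - x i))"

definition pivot_x :: "(nat \<Rightarrow> real) \<Rightarrow> (nat \<Rightarrow> nat) \<Rightarrow> nat \<Rightarrow> real" where
  "pivot_x x d i = x i + (\<Sum>j\<in>{1..4}. real (d j) * (x j - x i)^2) / pivot_den x d i"

definition pivot_y :: "(nat \<Rightarrow> real) \<Rightarrow> (nat \<Rightarrow> real) \<Rightarrow> (nat \<Rightarrow> nat) \<Rightarrow> nat \<Rightarrow> real" where
  "pivot_y x y d i = y i + (\<Sum>j\<in>{1..4}. real (d j) * (x j - x i) * (y j - y i)) / pivot_den x d i"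

end

theory Submission
  imports Defs
begin

lemma sum14: "(\<Sum>j\<in>{1..4::nat}. f j) = f 1 + f 2 + f 3 + (f 4::real)"
proof -
  have "{1..4::nat} = {1,2,3,4}" by auto
  then show ?thesis by simp
qed

lemma key:
  fixes D :: real
  assumes "D = c1*u1 + c3*u3 + c4*u4" "D \<noteq> 0"
  shows "z0 + (c1*u1*(z1-z0) + c3*u3*(z3-z0) + c4*u4*(z4-z0))/D
         = c1*u1/D*z1 + c3*u3/D*z3 + c4*u4/D*z4"
proof -
  have e: "z0*D + (c1*u1*(z1-z0) + c3*u3*(z3-z0) + c4*u4*(z4-z0)) = c1*u1*z1 + c3*u3*z3 + c4*u4*z4"
    unfolding assms(1) by (simp add: algebra_simps)
  have "z0 + (c1*u1*(z1-z0) + c3*u3*(z3-z0) + c4*u4*(z4-z0))/D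
     = (z0*D + (c1*u1*(z1-z0) + c3*u3*(z3-z0) + c4*u4*(z4-z0)))/D"
    using assms(2) by (simp add: field_simps)
  also have "... = (c1*u1*z1 + c3*u3*z3 + c4*u4*z4)/D" using e by simp
  also have "... = c1*u1/D*z1 + c3*u3/D*z3 + c4*u4/D*z4" by (simp add: add_divide_distrib)
  finally show ?thesis .
qed

theorem proposition3:
  fixes x y :: "nat \<Rightarrow> real" and d :: "nat \<Rightarrow> nat"
  assumes "x 1 \<le> x 2" "x 2 \<le> x 3" "x 3 \<le> x 4"
    and "\<And>j. j \<in> {1..4} \<Longrightarrow> d j > 0"
  shows "(pivot_den x d 2 \<noteq> 0 \<longrightarrow>
           (\<exists>l1 l3 l4. l1 + l3 + l4 = 1
              \<and> pivot_x x d 2 = l1 * x 1 + l3 * x 3 + l4 * x 4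
              \<and> pivot_y x y d 2 = l1 * y 1 + l3 * y 3 + l4 * y 4
              \<and> ((l1 \<ge> 0 \<and> l3 \<le> 0 \<and> l4 \<le> 0) \<or> (l1 \<le> 0 \<and> l3 \<ge> 0 \<and> l4 \<ge> 0))))
       \<and> (pivot_den x d 3 \<noteq> 0 \<longrightarrow>
           (\<exists>m1 m2 m4. m1 + m2 + m4 = 1
              \<and> pivot_x x d 3 = m1 * x 1 + m2 * x 2 + m4 * x 4
              \<and> pivot_y x y d 3 = m1 * y 1 + m2 * y 2 + m4 * y 4
              \<and> ((m1 \<ge> 0 \<and> m2 \<ge> 0 \<and> m4 \<le> 0) \<or> (m1 \<le> 0 \<and> m2 \<le> 0 \<and> m4 \<ge> 0))))"
proof (intro conjI impI)
  assume D: "pivot_den x d 2 \<noteq> 0"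
  define D2 where "D2 = pivot_den x d 2"
  have D2e: "D2 = d 1 * (x 1 - x 2) + d 3 * (x 3 - x 2) + d 4 * (x 4 - x 2)"
    unfolding D2_def pivot_den_def sum14 by simp
  have nz: "D2 \<noteq> 0" using D D2_def by simp
  define l1 where "l1 = d 1 * (x 1 - x 2) / D2"
  define l3 where "l3 = d 3 * (x 3 - x 2) / D2"
  define l4 where "l4 = d 4 * (x 4 - x 2) / D2"
  have a1: "d 1 * (x 1 - x 2) \<le> 0" using assms(1) by (simp add: mult_nonneg_nonpos)
  have a3: "d 3 * (x 3 - x 2) \<ge> 0" using assms(2) by simp
  have a4: "d 4 * (x 4 - x 2) \<ge> 0" using assms(2,3) by simp
  show "\<exists>l1 l3 l4. l1 + l3 + l4 = 1
              \<and> pivot_x x d 2 = l1 * x 1 + l3 * x 3 + l4 * x 4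
              \<and> pivot_y x y d 2 = l1 * y 1 + l3 * y 3 + l4 * y 4
              \<and> ((l1 \<ge> 0 \<and> l3 \<le> 0 \<and> l4 \<le> 0) \<or> (l1 \<le> 0 \<and> l3 \<ge> 0 \<and> l4 \<ge> 0))"
  proof (intro exI conjI)
    show "l1 + l3 + l4 = 1"
    proof -
      have "l1 + l3 + l4 = (d 1 * (x 1 - x 2) + d 3 * (x 3 - x 2) + d 4 * (x 4 - x 2)) / D2"
        unfolding l1_def l3_def l4_def by (simp add: add_divide_distrib)
      also have "... = D2 / D2" using D2e by simp
      finally have "l1 + l3 + l4 = D2 / D2" .
      then show ?thesis using nz by simp
    qed
    show "pivot_x x d 2 = l1 * x 1 + l3 * x 3 + l4 * x 4"
    proof -
      have "pivot_x x d 2 = x 2 + (d 1 * (x 1 - x 2) * (x 1 - x 2) + d 3 * (x 3 - x 2) * (x 3 - x 2) + d 4 * (x 4 - x 2) * (x 4 - x 2)) / D2"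
        unfolding pivot_x_def D2_def[symmetric] sum14 by (simp add: power2_eq_square)
      also have "... = l1 * x 1 + l3 * x 3 + l4 * x 4"
        unfolding l1_def l3_def l4_def by (rule key[OF D2e nz])
      finally show ?thesis .
    qed
    show "pivot_y x y d 2 = l1 * y 1 + l3 * y 3 + l4 * y 4"
    proof -
      have "pivot_y x y d 2 = y 2 + (d 1 * (x 1 - x 2) * (y 1 - y 2) + d 3 * (x 3 - x 2) * (y 3 - y 2) + d 4 * (x 4 - x 2) * (y 4 - y 2)) / D2"
        unfolding pivot_y_def D2_def[symmetric] sum14 by (simp add: power2_eq_square)
      also have "... = l1 * y 1 + l3 * y 3 + l4 * y 4"
        unfolding l1_def l3_def l4_def by (rule key[OF D2e nz])
      finally show ?thesis .
    qed
    show "(l1 \<ge> 0 \<and> l3 \<le> 0 \<and> l4 \<le> 0) \<or> (l1 \<le> 0 \<and> l3 \<ge> 0 \<and> l4 \<ge> 0)"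
    proof (cases "D2 > 0")
      case True
      then show ?thesis using a1 a3 a4 unfolding l1_def l3_def l4_def
        by (simp add: divide_nonpos_pos divide_nonneg_pos)
    next
      case False
      then have "D2 < 0" using nz by simp
      then show ?thesis using a1 a3 a4 unfolding l1_def l3_def l4_def
        by (simp add: divide_nonpos_neg divide_nonneg_neg)
    qed
  qed
next
  assume D: "pivot_den x d 3 \<noteq> 0"
  define D3 where "D3 = pivot_den x d 3"
  have D3e: "D3 = d 1 * (x 1 - x 3) + d 2 * (x 2 - x 3) + d 4 * (x 4 - x 3)"
    unfolding D3_def pivot_den_def sum14 by simp
  have nz: "D3 \<noteq> 0" using D D3_def by simp
  define m1 where "m1 = d 1 * (x 1 - x 3) / D3"
  define m2 where "m2 = d 2 * (x 2 - x 3) / D3"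
  define m4 where "m4 = d 4 * (x 4 - x 3) / D3"
  have a1: "d 1 * (x 1 - x 3) \<le> 0" using assms(1,2) by (simp add: mult_nonneg_nonpos)
  have a2: "d 2 * (x 2 - x 3) \<le> 0" using assms(2) by (simp add: mult_nonneg_nonpos)
  have a4: "d 4 * (x 4 - x 3) \<ge> 0" using assms(3) by simp
  show "\<exists>m1 m2 m4. m1 + m2 + m4 = 1
              \<and> pivot_x x d 3 = m1 * x 1 + m2 * x 2 + m4 * x 4
              \<and> pivot_y x y d 3 = m1 * y 1 + m2 * y 2 + m4 * y 4
              \<and> ((m1 \<ge> 0 \<and> m2 \<ge> 0 \<and> m4 \<le> 0) \<or> (m1 \<le> 0 \<and> m2 \<le> 0 \<and> m4 \<ge> 0))"
  proof (intro exI conjI)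
    show "m1 + m2 + m4 = 1"
    proof -
      have "m1 + m2 + m4 = (d 1 * (x 1 - x 3) + d 2 * (x 2 - x 3) + d 4 * (x 4 - x 3)) / D3"
        unfolding m1_def m2_def m4_def by (simp add: add_divide_distrib)
      also have "... = D3 / D3" using D3e by simp
      finally have "m1 + m2 + m4 = D3 / D3" .
      then show ?thesis using nz by simp
    qed
    show "pivot_x x d 3 = m1 * x 1 + m2 * x 2 + m4 * x 4"
    proof -
      have "pivot_x x d 3 = x 3 + (d 1 * (x 1 - x 3) * (x 1 - x 3) + d 2 * (x 2 - x 3) * (x 2 - x 3) + d 4 * (x 4 - x 3) * (x 4 - x 3)) / D3"
        unfolding pivot_x_def D3_def[symmetric] sum14 by (simp add: power2_eq_square)
      also have "... = m1 * x 1 + m2 * x 2 + m4 * x 4"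
        unfolding m1_def m2_def m4_def by (rule key[OF D3e nz])
      finally show ?thesis .
    qed
    show "pivot_y x y d 3 = m1 * y 1 + m2 * y 2 + m4 * y 4"
    proof -
      have "pivot_y x y d 3 = y 3 + (d 1 * (x 1 - x 3) * (y 1 - y 3) + d 2 * (x 2 - x 3) * (y 2 - y 3) + d 4 * (x 4 - x 3) * (y 4 - y 3)) / D3"
        unfolding pivot_y_def D3_def[symmetric] sum14 by (simp add: power2_eq_square)
      also have "... = m1 * y 1 + m2 * y 2 + m4 * y 4"
        unfolding m1_def m2_def m4_def by (rule key[OF D3e nz])
      finally show ?thesis .
    qed
    show "(m1 \<ge> 0 \<and> m2 \<ge> 0 \<and> m4 \<le> 0) \<or> (m1 \<le> 0 \<and> m2 \<le> 0 \<and> m4 \<ge> 0)"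
    proof (cases "D3 > 0")
      case True
      then show ?thesis using a1 a2 a4 unfolding m1_def m2_def m4_def
        by (simp add: divide_nonpos_pos divide_nonneg_pos)
    next
      case False
      then have "D3 < 0" using nz by simp
      then show ?thesis using a1 a2 a4 unfolding m1_def m2_def m4_def
        by (simp add: divide_nonpos_neg divide_nonneg_neg)
    qed
  qed
qed

end
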